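(* Let $\gamma>1$ be a constant, let $\Omega\subset\mathbb{R}^2$ be open, and let $\rho,u,v,p$ be smooth ($C^1$) functions of $(x,y,t)\in\Omega\times[0,T]$ with $\rho>0$ and $p>0$ that satisfy the compressible Euler equations in primitive form \begin{align*} \rho_t + u\rho_x + v\rho_y + \rho(u_x+v_y)&=0,\\ u_t + uu_x + vu_y + p_x/\rho&=0,\\ v_t + uv_x + vv_y + p_y/\rho&=0,\\ p_t + up_x + vp_y + \gamma p(u_x+v_y)&=0. \end{align*} Define $\Phi=(\phi_1,\phi_2,\phi_3,\phi_4)^T=(\sqrt{\rho},\sqrt{\rho}\,u,\sqrt{\rho}\,v,\sqrt{p})^T$ (so $u=\phi_2/\phi_1$, $v=\phi_3/\phi_1$). Then $\Phi$ satisfies $$\Phi_t+(A_1\Phi)_x+A_2\Phi_x+(B_1\Phi)_y+B_2\Phi_y=0,$$ where $$A_1=\frac12\begin{bmatrix}u&0&0&0\\0&u&0&0\\0&0&u&0\\0&2(\gamma-1)\frac{\phi_4}{\phi_1}&0&(2-\gamma)u\end{bmatrix},\quad A_2=\frac12\begin{bmatrix}u&0&0&0\\0&u&0&4\frac{\phi_4}{\phi_1}\\0&0&u&0\\0&0&0&(2-\gamma)u\end{bmatrix},$$ $$B_1=\frac12\begin{bmatrix}v&0&0&0\\0&v&0&0\\0&0&v&0\\0&0&2(\gamma-1)\frac{\phi_4}{\phi_1}&(2-\gamma)v\end{bmatrix},\quad B_2=\frac12\begin{bmatrix}v&0&0&0\\0&v&0&0\\0&0&v&4\frac{\phi_4}{\phi_1}\\0&0&0&(2-\gamma)v\end{bmatrix}.$$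 Moreover, for every constant $\alpha^2>0$ and $P=\mathrm{diag}(\alpha^2,\tfrac{\gamma-1}{2},\tfrac{\gamma-1}{2},1)$, which is symmetric positive definite, one has $PA_2=(PA_1)^T$ and $PB_2=(PB_1)^T$. *)

theory Defs
  imports "HOL-Analysis.Analysis"
begin

text \<open>Partial derivatives of a field F at (x,y,t):
  in x and y ordinary (two-sided) derivatives of the slices, in t the derivative of the
  time slice within the closed time interval [0,T] (one-sided at the end points).\<close>

definition pdx :: "(real \<Rightarrow> real \<Rightarrow> real \<Rightarrow> 'a::real_normed_vector) \<Rightarrow> real \<Rightarrow> real \<Rightarrow> real \<Rightarrow> 'a" where
  "pdx F x y t = vector_derivative (\<lambda>s. F s y t) (at x)"

definition pdy :: "(real \<Rightarrow> real \<Rightarrow> real \<Rightarrow> 'a::real_normed_vector) \<Rightarrow> real \<Rightarrow> real \<Rightarrow> real \<Rightarrow> 'a" where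
  "pdy F x y t = vector_derivative (\<lambda>s. F x s t) (at y)"

definition pdt :: "real \<Rightarrow> (real \<Rightarrow> real \<Rightarrow> real \<Rightarrow> 'a::real_normed_vector) \<Rightarrow> real \<Rightarrow> real \<Rightarrow> real \<Rightarrow> 'a" where
  "pdt T F x y t = vector_derivative (\<lambda>s. F x y s) (at t within {0..T})"

definition domain :: "(real \<times> real) set \<Rightarrow> real \<Rightarrow> (real \<times> real \<times> real) set" where
  "domain \<Omega> T = {(x, y, t). (x, y) \<in> \<Omega> \<and> t \<in> {0..T}}"

definition C1_on :: "(real \<times> real \<times> real) set \<Rightarrow> (real \<Rightarrow> real \<Rightarrow> real \<Rightarrow> real) \<Rightarrow> bool" where
  "C1_on S F \<longleftrightarrow> (\<exists>D :: real \<times> real \<times> real \<Rightarrow> (real \<times> real \<times> real) \<Rightarrow>\<^sub>L real.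
      (\<forall>z\<in>S. ((\<lambda>(x, y, t). F x y t) has_derivative blinfun_apply (D z)) (at z within S))
      \<and> continuous_on S D)"

definition Phi :: "(real \<Rightarrow> real \<Rightarrow> real \<Rightarrow> real) \<Rightarrow> (real \<Rightarrow> real \<Rightarrow> real \<Rightarrow> real) \<Rightarrow>
    (real \<Rightarrow> real \<Rightarrow> real \<Rightarrow> real) \<Rightarrow> (real \<Rightarrow> real \<Rightarrow> real \<Rightarrow> real) \<Rightarrow> real \<Rightarrow> real \<Rightarrow> real \<Rightarrow> real^4" where
  "Phi \<rho> u v p x y t = vector [sqrt (\<rho> x y t), sqrt (\<rho> x y t) * u x y t,
                               sqrt (\<rho> x y t) * v x y t, sqrt (p x y t)]"

definition A1 :: "real \<Rightarrow> real^4 \<Rightarrow> real^4^4" where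
  "A1 \<gamma> \<phi> = (let u = \<phi>$2 / \<phi>$1 in (1/2) *\<^sub>R vector [
      vector [u, 0, 0, 0],
      vector [0, u, 0, 0],
      vector [0, 0, u, 0],
      vector [0, 2*(\<gamma>-1)*(\<phi>$4/\<phi>$1), 0, (2-\<gamma>)*u]])"

definition A2 :: "real \<Rightarrow> real^4 \<Rightarrow> real^4^4" where
  "A2 \<gamma> \<phi> = (let u = \<phi>$2 / \<phi>$1 in (1/2) *\<^sub>R vector [
      vector [u, 0, 0, 0],
      vector [0, u, 0, 4*(\<phi>$4/\<phi>$1)],
      vector [0, 0, u, 0],
      vector [0, 0, 0, (2-\<gamma>)*u]])"

definition B1 :: "real \<Rightarrow> real^4 \<Rightarrow> real^4^4" where
  "B1 \<gamma> \<phi> = (let v = \<phi>$3 / \<phi>$1 in (1/2) *\<^sub>R vector [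
      vector [v, 0, 0, 0],
      vector [0, v, 0, 0],
      vector [0, 0, v, 0],
      vector [0, 0, 2*(\<gamma>-1)*(\<phi>$4/\<phi>$1), (2-\<gamma>) * v]])"

definition B2 :: "real \<Rightarrow> real^4 \<Rightarrow> real^4^4" where
  "B2 \<gamma> \<phi> = (let v = \<phi>$3 / \<phi>$1 in (1/2) *\<^sub>R vector [
      vector [v, 0, 0, 0],
      vector [0, v, 0, 0],
      vector [0, 0, v, 4*(\<phi>$4/\<phi>$1)],
      vector [0, 0, 0, (2-\<gamma>) * v]])"

definition Pmat :: "real \<Rightarrow> real \<Rightarrow> real^4^4" where
  "Pmat \<gamma> \<alpha> = vector [
      vector [\<alpha>^2, 0, 0, 0],
      vector [0, (\<gamma>-1)/2, 0, 0],
      vector [0, 0, (\<gamma>-1)/2, 0],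
      vector [0, 0, 0, 1]]"

end

theory Submission imports Defs begin

lemma chain_line:
  assumes "(g has_derivative blinfun_apply D) (at (l x) within S)"
    and "(l has_derivative (\<lambda>h. h *\<^sub>R e)) (at x within U)" and "l ` U \<subseteq> S"
  shows "((\<lambda>s. g (l s)) has_real_derivative D e) (at x within U)"
proof -
  have "((g \<circ> l) has_derivative (blinfun_apply D \<circ> (\<lambda>h. h *\<^sub>R e))) (at x within U)"
    by (rule diff_chain_within[OF assms(2) has_derivative_subset[OF assms(1)]]) (use assms(3) in auto)
  moreover have "blinfun_apply D \<circ> (\<lambda>h. h *\<^sub>R e) = (*) (D e)"
    by (auto simp: blinfun.scaleR_right)
  ultimately show ?thesis by (simp add: has_field_derivative_def o_def)
qed

lemma C1_slices:
  assumes C: "C1_on (domain \<Omega> T) F" and oO: "open \<Omega>" and xy: "(x,y) \<in> \<Omega>" and t: "t \<in> {0..T}"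
  shows "\<exists>c. ((\<lambda>s. F s y t) has_real_derivative c) (at x)"
    "\<exists>c. ((\<lambda>s. F x s t) has_real_derivative c) (at y)"
    "\<exists>c. ((\<lambda>s. F x y s) has_real_derivative c) (at t within {0..T})"
proof -
  obtain D where D: "\<forall>z\<in>domain \<Omega> T. ((\<lambda>(x, y, t). F x y t) has_derivative blinfun_apply (D z)) (at z within domain \<Omega> T)"
    using C unfolding C1_on_def by blast
  let ?g = "\<lambda>(x, y, t). F x y t"
  have hd: "(?g has_derivative blinfun_apply (D (x,y,t))) (at (x,y,t) within domain \<Omega> T)"
    using D xy t by (auto simp: domain_def)
  show "\<exists>c. ((\<lambda>s. F s y t) has_real_derivative c) (at x)"
  proof -
    let ?U = "(\<lambda>s. (s,y)) -` \<Omega>"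
    have oU: "open ?U" using oO by (intro continuous_open_vimage) (auto intro!: continuous_intros)
    have xU: "x \<in> ?U" using xy by simp
    have l: "((\<lambda>s. (s,y,t)) has_derivative (\<lambda>h. h *\<^sub>R (1,0,0))) (at x within ?U)"
      by (auto intro!: derivative_eq_intros simp: fun_eq_iff zero_prod_def)
    have "((\<lambda>s. ?g (s,y,t)) has_real_derivative D (x,y,t) (1,0,0)) (at x within ?U)"
      by (rule chain_line[OF _ l]) (use hd t in \<open>auto simp: domain_def\<close>)
    then show ?thesis using at_within_open[OF xU oU] by auto
  qed
  show "\<exists>c. ((\<lambda>s. F x s t) has_real_derivative c) (at y)"
  proof -
    let ?U = "(\<lambda>s. (x,s)) -` \<Omega>"
    have oU: "open ?U" using oO by (intro continuous_open_vimage) (auto intro!: continuous_intros)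
    have xU: "y \<in> ?U" using xy by simp
    have l: "((\<lambda>s. (x,s,t)) has_derivative (\<lambda>h. h *\<^sub>R (0,1,0))) (at y within ?U)"
      by (auto intro!: derivative_eq_intros simp: fun_eq_iff zero_prod_def)
    have "((\<lambda>s. ?g (x,s,t)) has_real_derivative D (x,y,t) (0,1,0)) (at y within ?U)"
      by (rule chain_line[OF _ l]) (use hd t in \<open>auto simp: domain_def\<close>)
    then show ?thesis using at_within_open[OF xU oU] by auto
  qed
  show "\<exists>c. ((\<lambda>s. F x y s) has_real_derivative c) (at t within {0..T})"
  proof -
    have l: "((\<lambda>s. (x,y,s)) has_derivative (\<lambda>h. h *\<^sub>R (0,0,1))) (at t within {0..T})"
      by (auto intro!: derivative_eq_intros simp: fun_eq_iff zero_prod_def)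
    have "((\<lambda>s. ?g (x,y,s)) has_real_derivative D (x,y,t) (0,0,1)) (at t within {0..T})"
      by (rule chain_line[OF _ l]) (use hd xy in \<open>auto simp: domain_def\<close>)
    then show ?thesis by auto
  qed
qed

lemma vector_4 [simp]:
 "(vector [a,b,c,d] ::('a::zero)^4)$1 = a"
 "(vector [a,b,c,d] ::('a::zero)^4)$2 = b"
 "(vector [a,b,c,d] ::('a::zero)^4)$3 = c"
 "(vector [a,b,c,d] ::('a::zero)^4)$4 = d"
  unfolding vector_def by simp_all

lemma vec4_deriv:
  assumes "(f1 has_real_derivative d1) F" "(f2 has_real_derivative d2) F"
          "(f3 has_real_derivative d3) F" "(f4 has_real_derivative d4) F"
  shows "((\<lambda>s. vector [f1 s, f2 s, f3 s, f4 s] :: real^4) has_vector_derivative vector [d1,d2,d3,d4]) F"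
proof -
  have eq: "\<And>a b c d. (vector [a,b,c,d] :: real^4) = a *\<^sub>R axis 1 1 + b *\<^sub>R axis 2 1 + c *\<^sub>R axis 3 1 + d *\<^sub>R axis 4 1"
    by (simp add: vec_eq_iff forall_4 axis_def)
  show ?thesis unfolding eq
    using assms
    by (intro has_vector_derivative_add bounded_linear.has_vector_derivative[OF bounded_linear_scaleR_left];
        simp add: has_real_derivative_iff_has_vector_derivative)
qed

lemma A1_mult: "\<phi>$1 \<noteq> 0 \<Longrightarrow> A1 g \<phi> *v \<phi> = vector [\<phi>$2/2, (\<phi>$2/\<phi>$1)*\<phi>$2/2, (\<phi>$2/\<phi>$1)*\<phi>$3/2, g*(\<phi>$2/\<phi>$1)*\<phi>$4/2]"
  by (simp add: A1_def Let_def vec_eq_iff forall_4 matrix_vector_mult_def sum_4 field_simps)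
lemma B1_mult: "\<phi>$1 \<noteq> 0 \<Longrightarrow> B1 g \<phi> *v \<phi> = vector [\<phi>$3/2, (\<phi>$3/\<phi>$1)*\<phi>$2/2, (\<phi>$3/\<phi>$1)*\<phi>$3/2, g*(\<phi>$3/\<phi>$1)*\<phi>$4/2]"
  by (simp add: B1_def Let_def vec_eq_iff forall_4 matrix_vector_mult_def sum_4 field_simps)
lemma A2_mult: "\<phi>$1 \<noteq> 0 \<Longrightarrow> A2 g \<phi> *v w = vector [(\<phi>$2/\<phi>$1)*w$1/2, ((\<phi>$2/\<phi>$1)*w$2 + 4*(\<phi>$4/\<phi>$1)*w$4)/2, (\<phi>$2/\<phi>$1)*w$3/2, (2-g)*(\<phi>$2/\<phi>$1)*w$4/2]"
  by (simp add: A2_def Let_def vec_eq_iff forall_4 matrix_vector_mult_def sum_4 field_simps)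
lemma B2_mult: "\<phi>$1 \<noteq> 0 \<Longrightarrow> B2 g \<phi> *v w = vector [(\<phi>$3/\<phi>$1)*w$1/2, (\<phi>$3/\<phi>$1)*w$2/2, ((\<phi>$3/\<phi>$1)*w$3 + 4*(\<phi>$4/\<phi>$1)*w$4)/2, (2-g)*(\<phi>$3/\<phi>$1)*w$4/2]"
  by (simp add: B2_def Let_def vec_eq_iff forall_4 matrix_vector_mult_def sum_4 field_simps)

lemma dir:
  fixes r a b q :: "real \<Rightarrow> real" and g :: real
  assumes pos: "r s0 > 0" "q s0 > 0"
    and dr: "(r has_real_derivative r') (at s0 within X)"
    and da: "(a has_real_derivative a') (at s0 within X)"
    and db: "(b has_real_derivative b') (at s0 within X)"
    and dq: "(q has_real_derivative q') (at s0 within X)"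
  defines "ph \<equiv> \<lambda>s. vector [sqrt (r s), sqrt (r s) * a s, sqrt (r s) * b s, sqrt (q s)] :: real^4"
  shows "(ph has_vector_derivative vector [r'/(2* sqrt(r s0)), r'/(2* sqrt(r s0))*a s0 + sqrt(r s0)*a',
            r'/(2* sqrt(r s0))*b s0 + sqrt(r s0)*b', q'/(2* sqrt(q s0))]) (at s0 within X)"
    and "((\<lambda>s. A1 g (ph s) *v ph s) has_vector_derivative vector [
            (r'/(2* sqrt(r s0))*a s0 + sqrt(r s0)*a')/2,
            (r'/(2* sqrt(r s0))*a s0*a s0 + 2* sqrt(r s0)*a s0*a')/2,
            (r'/(2* sqrt(r s0))*a s0*b s0 + sqrt(r s0)*a'*b s0 + sqrt(r s0)*a s0*b')/2,
            g*(a'* sqrt(q s0) + a s0*q'/(2* sqrt(q s0)))/2]) (at s0 within X)"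
    and "((\<lambda>s. B1 g (ph s) *v ph s) has_vector_derivative vector [
            (r'/(2* sqrt(r s0))*b s0 + sqrt(r s0)*b')/2,
            (r'/(2* sqrt(r s0))*b s0*a s0 + sqrt(r s0)*b'*a s0 + sqrt(r s0)*b s0*a')/2,
            (r'/(2* sqrt(r s0))*b s0*b s0 + 2* sqrt(r s0)*b s0*b')/2,
            g*(b'* sqrt(q s0) + b s0*q'/(2* sqrt(q s0)))/2]) (at s0 within X)"
proof -
  have sr: "((\<lambda>s. sqrt (r s)) has_real_derivative r'/(2* sqrt(r s0))) (at s0 within X)"
    using pos by (auto intro!: derivative_eq_intros dr simp: field_simps)
  have sq: "((\<lambda>s. sqrt (q s)) has_real_derivative q'/(2* sqrt(q s0))) (at s0 within X)"
    using pos by (auto intro!: derivative_eq_intros dq simp: field_simps)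
  show "(ph has_vector_derivative vector [r'/(2* sqrt(r s0)), r'/(2* sqrt(r s0))*a s0 + sqrt(r s0)*a',
            r'/(2* sqrt(r s0))*b s0 + sqrt(r s0)*b', q'/(2* sqrt(q s0))]) (at s0 within X)"
    unfolding ph_def using pos
    by (intro vec4_deriv sr sq) (auto intro!: derivative_eq_intros dr da db simp: field_simps)
  have ev: "eventually (\<lambda>s. s \<in> X \<longrightarrow> r s > 0) (nhds s0)"
  proof -
    have "(r \<longlongrightarrow> r s0) (at s0 within X)"
      using DERIV_continuous[OF dr] by (simp add: continuous_within)
    then have "eventually (\<lambda>s. r s > 0) (at s0 within X)"
      using pos(1) by (rule order_tendstoD)
    then show ?thesis using pos(1) unfolding eventually_at_filter
      by (auto elim!: eventually_mono)
  qed
  have e1: "eventually (\<lambda>s. s \<in> X \<longrightarrow> A1 g (ph s) *v ph s = vector [sqrt (r s) * a s/2, sqrt (r s) * a s * a s/2, sqrt (r s)*a s*b s/2, g*a s* sqrt (q s)/2]) (nhds s0)"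
    using ev by (auto elim!: eventually_mono simp: A1_mult ph_def mult_ac)
  have e2: "eventually (\<lambda>s. s \<in> X \<longrightarrow> B1 g (ph s) *v ph s = vector [sqrt (r s) * b s/2, sqrt (r s) * b s * a s/2, sqrt (r s)*b s*b s/2, g*b s* sqrt (q s)/2]) (nhds s0)"
    using ev by (auto elim!: eventually_mono simp: B1_mult ph_def mult_ac)
  show "((\<lambda>s. A1 g (ph s) *v ph s) has_vector_derivative vector [
            (r'/(2* sqrt(r s0))*a s0 + sqrt(r s0)*a')/2,
            (r'/(2* sqrt(r s0))*a s0*a s0 + 2* sqrt(r s0)*a s0*a')/2,
            (r'/(2* sqrt(r s0))*a s0*b s0 + sqrt(r s0)*a'*b s0 + sqrt(r s0)*a s0*b')/2,
            g*(a'* sqrt(q s0) + a s0*q'/(2* sqrt(q s0)))/2]) (at s0 within X)"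
    apply (subst has_vector_derivative_cong_ev[OF e1])
     apply (use pos in \<open>simp add: A1_mult ph_def mult_ac\<close>)
    apply (intro vec4_deriv)
       apply (use pos in \<open>auto intro!: derivative_eq_intros dr dq da db simp: field_simps\<close>)
    done
  show "((\<lambda>s. B1 g (ph s) *v ph s) has_vector_derivative vector [
            (r'/(2* sqrt(r s0))*b s0 + sqrt(r s0)*b')/2,
            (r'/(2* sqrt(r s0))*b s0*a s0 + sqrt(r s0)*b'*a s0 + sqrt(r s0)*b s0*a')/2,
            (r'/(2* sqrt(r s0))*b s0*b s0 + 2* sqrt(r s0)*b s0*b')/2,
            g*(b'* sqrt(q s0) + b s0*q'/(2* sqrt(q s0)))/2]) (at s0 within X)"
    apply (subst has_vector_derivative_cong_ev[OF e2])
     apply (use pos in \<open>simp add: B1_mult ph_def mult_ac\<close>)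
    apply (intro vec4_deriv)
       apply (use pos in \<open>auto intro!: derivative_eq_intros dr dq da db simp: field_simps\<close>)
    done
qed

lemma alg:
  fixes sR sQ U V Rx Ry Rt Ux Uy Ut Vx Vy Vt Px Py Pt g :: real
  assumes pos: "sR > 0" "sQ > 0"
    and h1: "Rt + U * Rx + V * Ry + sR^2 * (Ux + Vy) = 0"
    and h2: "Ut + U * Ux + V * Uy + Px / sR^2 = 0"
    and h3: "Vt + U * Vx + V * Vy + Py / sR^2 = 0"
    and h4: "Pt + U * Px + V * Py + g * sQ^2 * (Ux + Vy) = 0"
  shows "vector [Rt/(2 * sR), Rt/(2 * sR)*U + sR*Ut, Rt/(2 * sR)*V + sR*Vt, Pt/(2 * sQ)]
    + vector [
            (Rx/(2 * sR)*U + sR*Ux)/2,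
            (Rx/(2 * sR)*U*U + 2 * sR*U*Ux)/2,
            (Rx/(2 * sR)*U*V + sR*Ux*V + sR*U*Vx)/2,
            g*(Ux* sQ + U*Px/(2 * sQ))/2]
    + A2 g (vector [sR, sR*U, sR*V, sQ]) *v vector [Rx/(2 * sR), Rx/(2 * sR)*U + sR*Ux, Rx/(2 * sR)*V + sR*Vx, Px/(2 * sQ)]
    + vector [
            (Ry/(2 * sR)*V + sR*Vy)/2,
            (Ry/(2 * sR)*V*U + sR*Vy*U + sR*V*Uy)/2,
            (Ry/(2 * sR)*V*V + 2 * sR*V*Vy)/2,
            g*(Vy* sQ + V*Py/(2 * sQ))/2]
    + B2 g (vector [sR, sR*U, sR*V, sQ]) *v vector [Ry/(2 * sR), Ry/(2 * sR)*U + sR*Uy, Ry/(2 * sR)*V + sR*Vy, Py/(2 * sQ)]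
    = (0::real^4)"
proof -
  have ne: "(vector [sR, sR*U, sR*V, sQ] :: real^4) $ 1 \<noteq> 0" using pos by simp
  have Rt: "Rt = - (U * Rx + V * Ry + sR^2 * (Ux + Vy))" using h1 by linarith
  have Ut: "Ut = - (U * Ux + V * Uy + Px / sR^2)" using h2 by linarith
  have Vt: "Vt = - (U * Vx + V * Vy + Py / sR^2)" using h3 by linarith
  have Pt: "Pt = - (U * Px + V * Py + g * sQ^2 * (Ux + Vy))" using h4 by linarith
  show ?thesis
    unfolding A2_mult[OF ne] B2_mult[OF ne] vec_eq_iff forall_4
    using pos by (simp add: Rt Ut Vt Pt field_simps power2_eq_square)
qed
theorem mainTheorem1:
  fixes \<gamma> T :: real and \<Omega> :: "(real \<times> real) set"
    and \<rho> u v p :: "real \<Rightarrow> real \<Rightarrow> real \<Rightarrow> real"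
  assumes "\<gamma> > 1" and "T > 0" and "open \<Omega>"
    and "C1_on (domain \<Omega> T) \<rho>" and "C1_on (domain \<Omega> T) u"
    and "C1_on (domain \<Omega> T) v" and "C1_on (domain \<Omega> T) p"
    and "\<forall>(x, y, t) \<in> domain \<Omega> T. \<rho> x y t > 0 \<and> p x y t > 0"
    and "\<forall>(x, y, t) \<in> domain \<Omega> T.
           pdt T \<rho> x y t + u x y t * pdx \<rho> x y t + v x y t * pdy \<rho> x y t
             + \<rho> x y t * (pdx u x y t + pdy v x y t) = 0"
    and "\<forall>(x, y, t) \<in> domain \<Omega> T.
           pdt T u x y t + u x y t * pdx u x y t + v x y t * pdy u x y t
             + pdx p x y t / \<rho> x y t = 0"
    and "\<forall>(x, y, t) \<in> domain \<Omega> T.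
           pdt T v x y t + u x y t * pdx v x y t + v x y t * pdy v x y t
             + pdy p x y t / \<rho> x y t = 0"
    and "\<forall>(x, y, t) \<in> domain \<Omega> T.
           pdt T p x y t + u x y t * pdx p x y t + v x y t * pdy p x y t
             + \<gamma> * p x y t * (pdx u x y t + pdy v x y t) = 0"
  shows "(\<forall>(x, y, t) \<in> domain \<Omega> T.
            pdt T (Phi \<rho> u v p) x y t
            + pdx (\<lambda>x' y' t'. A1 \<gamma> (Phi \<rho> u v p x' y' t') *v Phi \<rho> u v p x' y' t') x y t
            + A2 \<gamma> (Phi \<rho> u v p x y t) *v pdx (Phi \<rho> u v p) x y t
            + pdy (\<lambda>x' y' t'. B1 \<gamma> (Phi \<rho> u v p x' y' t') *v Phi \<rho> u v p x' y' t') x y t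
            + B2 \<gamma> (Phi \<rho> u v p x y t) *v pdy (Phi \<rho> u v p) x y t = 0)
       \<and> (\<forall>\<alpha>::real. \<alpha>^2 > 0 \<longrightarrow>
            transpose (Pmat \<gamma> \<alpha>) = Pmat \<gamma> \<alpha>
            \<and> (\<forall>w::real^4. w \<noteq> 0 \<longrightarrow> w \<bullet> (Pmat \<gamma> \<alpha> *v w) > 0)
            \<and> (\<forall>(x, y, t) \<in> domain \<Omega> T.
                 Pmat \<gamma> \<alpha> ** A2 \<gamma> (Phi \<rho> u v p x y t)
                   = transpose (Pmat \<gamma> \<alpha> ** A1 \<gamma> (Phi \<rho> u v p x y t))
               \<and> Pmat \<gamma> \<alpha> ** B2 \<gamma> (Phi \<rho> u v p x y t)
                   = transpose (Pmat \<gamma> \<alpha> ** B1 \<gamma> (Phi \<rho> u v p x y t))))"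
proof -
  have part1: "pdt T (Phi \<rho> u v p) x y t
            + pdx (\<lambda>x' y' t'. A1 \<gamma> (Phi \<rho> u v p x' y' t') *v Phi \<rho> u v p x' y' t') x y t
            + A2 \<gamma> (Phi \<rho> u v p x y t) *v pdx (Phi \<rho> u v p) x y t
            + pdy (\<lambda>x' y' t'. B1 \<gamma> (Phi \<rho> u v p x' y' t') *v Phi \<rho> u v p x' y' t') x y t
            + B2 \<gamma> (Phi \<rho> u v p x y t) *v pdy (Phi \<rho> u v p) x y t = 0"
    if dom: "(x, y, t) \<in> domain \<Omega> T" for x y t
  proof -
    from dom have xy: "(x,y) \<in> \<Omega>" and t: "t \<in> {0..T}" by (auto simp: domain_def)
    note S\<rho> = C1_slices[OF assms(4) assms(3) xy t]
    note Su = C1_slices[OF assms(5) assms(3) xy t]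
    note Sv = C1_slices[OF assms(6) assms(3) xy t]
    note Sp = C1_slices[OF assms(7) assms(3) xy t]
    obtain Rx where Rx: "((\<lambda>s. \<rho> s y t) has_real_derivative Rx) (at x)" using S\<rho>(1) by blast
    obtain Ry where Ry: "((\<lambda>s. \<rho> x s t) has_real_derivative Ry) (at y)" using S\<rho>(2) by blast
    obtain Rt where Rt: "((\<lambda>s. \<rho> x y s) has_real_derivative Rt) (at t within {0..T})" using S\<rho>(3) by blast
    obtain Ux where Ux: "((\<lambda>s. u s y t) has_real_derivative Ux) (at x)" using Su(1) by blast
    obtain Uy where Uy: "((\<lambda>s. u x s t) has_real_derivative Uy) (at y)" using Su(2) by blast
    obtain Ut where Ut: "((\<lambda>s. u x y s) has_real_derivative Ut) (at t within {0..T})" using Su(3) by blast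
    obtain Vx where Vx: "((\<lambda>s. v s y t) has_real_derivative Vx) (at x)" using Sv(1) by blast
    obtain Vy where Vy: "((\<lambda>s. v x s t) has_real_derivative Vy) (at y)" using Sv(2) by blast
    obtain Vt where Vt: "((\<lambda>s. v x y s) has_real_derivative Vt) (at t within {0..T})" using Sv(3) by blast
    obtain Px where Px: "((\<lambda>s. p s y t) has_real_derivative Px) (at x)" using Sp(1) by blast
    obtain Py where Py: "((\<lambda>s. p x s t) has_real_derivative Py) (at y)" using Sp(2) by blast
    obtain Pt where Pt: "((\<lambda>s. p x y s) has_real_derivative Pt) (at t within {0..T})" using Sp(3) by blast
    have pos: "\<rho> x y t > 0" "p x y t > 0" using assms(8) dom by auto
    note DX = dir[OF pos Rx Ux Vx Px]
    note DY = dir[OF pos Ry Uy Vy Py]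
    note DT = dir[OF pos Rt Ut Vt Pt]
    have vd: "vector_derivative f (at x) = f'" if "(f has_real_derivative f') (at x)" for f f' x
      using that by (simp add: has_real_derivative_iff_has_vector_derivative vector_derivative_at)
    have vdt: "vector_derivative f (at t within {0..T}) = f'" if "(f has_vector_derivative f') (at t within {0..T})" for f :: "real \<Rightarrow> 'z::euclidean_space" and f'
      using vector_derivative_within_closed_interval[OF assms(2) t that] .
    have e1: "pdx \<rho> x y t = Rx" "pdx u x y t = Ux" "pdx v x y t = Vx" "pdx p x y t = Px"
      unfolding pdx_def by (intro vd Rx Ux Vx Px)+
    have e2: "pdy \<rho> x y t = Ry" "pdy u x y t = Uy" "pdy v x y t = Vy" "pdy p x y t = Py"
      unfolding pdy_def by (intro vd Ry Uy Vy Py)+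
    have vdt_r: "vector_derivative f (at t within {0..T}) = f'" if "(f has_real_derivative f') (at t within {0..T})" for f f'
      using vector_derivative_within_closed_interval[OF assms(2) t] that
      by (simp add: has_real_derivative_iff_has_vector_derivative)
    have e3: "pdt T \<rho> x y t = Rt" "pdt T u x y t = Ut" "pdt T v x y t = Vt" "pdt T p x y t = Pt"
      unfolding pdt_def using vdt_r[OF Rt] vdt_r[OF Ut] vdt_r[OF Vt] vdt_r[OF Pt] by simp_all
    have f1: "pdx (Phi \<rho> u v p) x y t = vector [Rx/(2 * sqrt(\<rho> x y t)), Rx/(2 * sqrt(\<rho> x y t))*u x y t + sqrt(\<rho> x y t)*Ux,
            Rx/(2 * sqrt(\<rho> x y t))* v x y t + sqrt(\<rho> x y t)*Vx, Px/(2 * sqrt(p x y t))]"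
      unfolding pdx_def Phi_def by (rule vector_derivative_at) (rule DX(1))
    have f2: "pdy (Phi \<rho> u v p) x y t = vector [Ry/(2 * sqrt(\<rho> x y t)), Ry/(2 * sqrt(\<rho> x y t))*u x y t + sqrt(\<rho> x y t)*Uy,
            Ry/(2 * sqrt(\<rho> x y t))* v x y t + sqrt(\<rho> x y t)*Vy, Py/(2 * sqrt(p x y t))]"
      unfolding pdy_def Phi_def by (rule vector_derivative_at) (rule DY(1))
    have f3: "pdt T (Phi \<rho> u v p) x y t = vector [Rt/(2 * sqrt(\<rho> x y t)), Rt/(2 * sqrt(\<rho> x y t))*u x y t + sqrt(\<rho> x y t)*Ut,
            Rt/(2 * sqrt(\<rho> x y t))* v x y t + sqrt(\<rho> x y t)*Vt, Pt/(2 * sqrt(p x y t))]"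
      unfolding pdt_def Phi_def by (rule vdt) (rule DT(1))
    have g1: "pdx (\<lambda>x' y' t'. A1 \<gamma> (Phi \<rho> u v p x' y' t') *v Phi \<rho> u v p x' y' t') x y t = vector [
            (Rx/(2 * sqrt(\<rho> x y t))*u x y t + sqrt(\<rho> x y t)*Ux)/2,
            (Rx/(2 * sqrt(\<rho> x y t))*u x y t*u x y t + 2 * sqrt(\<rho> x y t)*u x y t*Ux)/2,
            (Rx/(2 * sqrt(\<rho> x y t))*u x y t* v x y t + sqrt(\<rho> x y t)*Ux* v x y t + sqrt(\<rho> x y t)*u x y t*Vx)/2,
            \<gamma>*(Ux* sqrt(p x y t) + u x y t*Px/(2 * sqrt(p x y t)))/2]"
      unfolding pdx_def Phi_def by (rule vector_derivative_at) (rule DX(2))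
    have g2: "pdy (\<lambda>x' y' t'. B1 \<gamma> (Phi \<rho> u v p x' y' t') *v Phi \<rho> u v p x' y' t') x y t = vector [
            (Ry/(2 * sqrt(\<rho> x y t))* v x y t + sqrt(\<rho> x y t)*Vy)/2,
            (Ry/(2 * sqrt(\<rho> x y t))* v x y t*u x y t + sqrt(\<rho> x y t)*Vy*u x y t + sqrt(\<rho> x y t)* v x y t*Uy)/2,
            (Ry/(2 * sqrt(\<rho> x y t))* v x y t* v x y t + 2 * sqrt(\<rho> x y t)* v x y t*Vy)/2,
            \<gamma>*(Vy* sqrt(p x y t) + v x y t*Py/(2 * sqrt(p x y t)))/2]"
      unfolding pdy_def Phi_def by (rule vector_derivative_at) (rule DY(3))
    have h1: "Rt + u x y t * Rx + v x y t * Ry + \<rho> x y t * (Ux + Vy) = 0"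
      using bspec[OF assms(9) dom] by (simp add: e1 e2 e3)
    have h2: "Ut + u x y t * Ux + v x y t * Uy + Px / \<rho> x y t = 0"
      using bspec[OF assms(10) dom] by (simp add: e1 e2 e3)
    have h3: "Vt + u x y t * Vx + v x y t * Vy + Py / \<rho> x y t = 0"
      using bspec[OF assms(11) dom] by (simp add: e1 e2 e3)
    have h4: "Pt + u x y t * Px + v x y t * Py + \<gamma> * p x y t * (Ux + Vy) = 0"
      using bspec[OF assms(12) dom] by (simp add: e1 e2 e3)
    have ph1: "Phi \<rho> u v p x y t $ 1 \<noteq> 0" using pos by (simp add: Phi_def)
    have sR: "sqrt (\<rho> x y t) > 0" and sQ: "sqrt (p x y t) > 0" using pos by auto
    have h1': "Rt + u x y t * Rx + v x y t * Ry + (sqrt (\<rho> x y t))^2 * (Ux + Vy) = 0"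
      using h1 pos by simp
    have h2': "Ut + u x y t * Ux + v x y t * Uy + Px / (sqrt (\<rho> x y t))^2 = 0"
      using h2 pos by simp
    have h3': "Vt + u x y t * Vx + v x y t * Vy + Py / (sqrt (\<rho> x y t))^2 = 0"
      using h3 pos by simp
    have h4': "Pt + u x y t * Px + v x y t * Py + \<gamma> * (sqrt (p x y t))^2 * (Ux + Vy) = 0"
      using h4 pos by simp
    show ?thesis
      unfolding f1 f2 f3 g1 g2 unfolding Phi_def
      by (rule alg[OF sR sQ h1' h2' h3' h4'])
  qed
  have part3: "Pmat \<gamma> \<alpha> ** A2 \<gamma> \<phi> = transpose (Pmat \<gamma> \<alpha> ** A1 \<gamma> \<phi>)
       \<and> Pmat \<gamma> \<alpha> ** B2 \<gamma> \<phi> = transpose (Pmat \<gamma> \<alpha> ** B1 \<gamma> \<phi>)" for \<alpha> \<phi>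
    by (simp add: Pmat_def A1_def A2_def B1_def B2_def Let_def vec_eq_iff forall_4 matrix_matrix_mult_def transpose_def sum_4)
  show ?thesis
  proof (intro conjI allI impI)
    show "\<forall>(x, y, t) \<in> domain \<Omega> T.
            pdt T (Phi \<rho> u v p) x y t
            + pdx (\<lambda>x' y' t'. A1 \<gamma> (Phi \<rho> u v p x' y' t') *v Phi \<rho> u v p x' y' t') x y t
            + A2 \<gamma> (Phi \<rho> u v p x y t) *v pdx (Phi \<rho> u v p) x y t
            + pdy (\<lambda>x' y' t'. B1 \<gamma> (Phi \<rho> u v p x' y' t') *v Phi \<rho> u v p x' y' t') x y t
            + B2 \<gamma> (Phi \<rho> u v p x y t) *v pdy (Phi \<rho> u v p) x y t = 0"
      using part1 by blast
  next
    fix \<alpha> :: real assume a: "\<alpha>^2 > 0"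
    show "transpose (Pmat \<gamma> \<alpha>) = Pmat \<gamma> \<alpha>"
      by (simp add: vec_eq_iff forall_4 transpose_def Pmat_def)
    show "\<forall>(x, y, t) \<in> domain \<Omega> T.
                 Pmat \<gamma> \<alpha> ** A2 \<gamma> (Phi \<rho> u v p x y t)
                   = transpose (Pmat \<gamma> \<alpha> ** A1 \<gamma> (Phi \<rho> u v p x y t))
               \<and> Pmat \<gamma> \<alpha> ** B2 \<gamma> (Phi \<rho> u v p x y t)
                   = transpose (Pmat \<gamma> \<alpha> ** B1 \<gamma> (Phi \<rho> u v p x y t))"
      using part3 by blast
    fix w :: "real^4" assume w: "w \<noteq> 0"
    then have nz: "w$1 \<noteq> 0 \<or> w$2 \<noteq> 0 \<or> w$3 \<noteq> 0 \<or> w$4 \<noteq> 0"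
      by (auto simp: vec_eq_iff forall_4)
    have eq: "w \<bullet> (Pmat \<gamma> \<alpha> *v w) = \<alpha>^2*(w$1)^2 + (\<gamma>-1)/2*(w$2)^2 + (\<gamma>-1)/2*(w$3)^2 + (w$4)^2"
      by (simp add: inner_vec_def sum_4 Pmat_def matrix_vector_mult_def power2_eq_square) (simp add: field_simps)
    have g: "(\<gamma>-1)/2 > 0" using assms(1) by simp
    have t1: "\<alpha>^2*(w$1)^2 \<ge> 0" "(\<gamma>-1)/2*(w$2)^2 \<ge> 0" "(\<gamma>-1)/2*(w$3)^2 \<ge> 0" "(w$4)^2 \<ge> 0"
      using a g by auto
    have t2: "w$1 \<noteq> 0 \<Longrightarrow> \<alpha>^2*(w$1)^2 > 0" "w$2 \<noteq> 0 \<Longrightarrow> (\<gamma>-1)/2*(w$2)^2 > 0"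
      "w$3 \<noteq> 0 \<Longrightarrow> (\<gamma>-1)/2*(w$3)^2 > 0" "w$4 \<noteq> 0 \<Longrightarrow> (w$4)^2 > 0"
      using a g by auto
    show "w \<bullet> (Pmat \<gamma> \<alpha> *v w) > 0"
      unfolding eq using nz t1 t2 by linarith
  qed
qed
end
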